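(* Assume (A2), (A3), (A4) and (A7) below, and suppose the training sequence $(S_n)_{n\ge1}$ satisfies infill asymptotics with respect to $(S^*_m)_{m=1}^M$. Let $(a_t)_{t\ge1}$ be any sequence of positive numbers with $a_t\to0$, and let $(k_N)_{N\ge1}$ be the adaptive number-of-neighbors sequence built from $(a_t)$. Then the estimator $\hat\beta_N=\tau(\Psi^{N,k_N}Y_{1:N})$ converges in probability to $\beta^*$ as $N\to\infty$.
   Context: Setting: $(\mathcal S,d)$ is a metric space. Fix $M\in\mathbb N$ and target locations $S^*_1,\dots,S^*_M\in\mathcal S$. There is a deterministic map $\chi:\mathcal S\to\mathbb R^P$; the target covariates are $X^*_m=\chi(S^*_m)\in\mathbb R^P$. Training locations form a deterministic sequence $(S_n)_{n\ge1}$ in $\mathcal S$, with covariates $X_n=\chi(S_n)$ and real-valued random responses $Y_n$; $Y_{1:N}=(Y_1,\dots,Y_N)$. The unobserved target responses $Y^*_m$ are real random variables. (A2) There is $f:\mathcal S\to\mathbb R$ with $\mathbb E[Y_n]=f(S_n)$ for all $n$ and $\mathbb E[Y^*_m]=f(S^*_m)$ for all $m$, and all the $Y_n$ and $Y^*_m$ are mutually independent. Write $\mu^*=(f(S^*_1),\dots,f(S^*_M))\in\mathbb R^M$. (A3) $f$ is $L$-Lipschitz: $|f(s)-f(s')|\le L\,d(s,s')$. (A4) There is $\rho^2:\mathcal S\to[0,B_Y]$ with $\mathrm{Var}(Y_n)=\rho^2(S_n)$ and $\mathrm{Var}(Y^*_m)=\rho^2(S^*_m)$. GLM: $\kappa:\mathbb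 R\to\mathbb R$ is the convex, infinitely differentiable cumulant function of a natural exponential family (model density $c(y)\exp(\theta y-\kappa(\theta))$, $\theta=x^\top\beta$). Define $\ell^*(\beta)=\sum_{m=1}^M\big[(X^*_m)^\top\beta\, f(S^*_m)-\kappa((X^*_m)^\top\beta)\big]$ (the expected target log-likelihood up to a constant) and $\beta^*=\arg\max_{\beta\in\mathbb R^P}\ell^*(\beta)$. (A7) A maximizer $\beta^*$ exists and $\ell^*$ is strictly concave on an open neighborhood of $\beta^*$. For $A\in\mathbb R^M$, $\tau(A)\in\mathbb R^P$ denotes the (unique, where it exists) maximizer of $\beta\mapsto\sum_{m=1}^M (X^*_m)^\top\beta\,A_m-\kappa((X^*_m)^\top\beta)$; thus $\tau(\mu^* )=\beta^*$. Infill asymptotics: for every $m$ and every open set $U\ni S^*_m$, infinitely many $n$ satisfy $S_n\in U$. Nearest-neighbor weight matrix $\Psi^{N,k}\in\mathbb R^{M\times N}$: $\Psi^{N,k}_{mn}=1/k$ if $S_n$ is among the $k$ training locations in $\{S_1,\dots,S_N\}$ closest to $S^*_m$, and $0$ otherwise; ties are broken uniformly at random, independently of the responses. Adaptive number of neighbors: for $t\le N$ let $R_{N,t}=\max_{1\le m\le M}\max\{d(S^*_m,S_n): n\le N,\ S_n \text{ is among the } t \text{ nearest neighbors of } S^*_m \text{ in } \{S_1,\dots,S_N\}\}$. Given $(a_t)$, set $k_1=1$ and $k_{N+1}=k_N+1$ if $R_{N+1,k_N+1}\le a_{k_N}$, and $k_{N+1}=k_N$ otherwise. *)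

theory Defs
  imports "HOL-Probability.Probability"
begin

definition strictly_concave_on :: "'a::real_vector set \<Rightarrow> ('a \<Rightarrow> real) \<Rightarrow> bool" where
  "strictly_concave_on U g \<longleftrightarrow> convex U \<and>
     (\<forall>x\<in>U. \<forall>y\<in>U. x \<noteq> y \<longrightarrow> (\<forall>t::real. 0 < t \<and> t < 1 \<longrightarrow>
        (1 - t) * g x + t * g y < g ((1 - t) *\<^sub>R x + t *\<^sub>R y)))"

definition glm_obj :: "(real \<Rightarrow> real) \<Rightarrow> nat \<Rightarrow> (nat \<Rightarrow> real ^ 'p) \<Rightarrow> (nat \<Rightarrow> real) \<Rightarrow> real ^ 'p \<Rightarrow> real" where
  "glm_obj \<kappa> M Xs A \<beta> = (\<Sum>m<M. (Xs m \<bullet> \<beta>) * A m - \<kappa> (Xs m \<bullet> \<beta>))"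

text \<open>tau(A): the unique maximiser (arbitrary value if there is no unique maximiser).\<close>
definition tau :: "(real \<Rightarrow> real) \<Rightarrow> nat \<Rightarrow> (nat \<Rightarrow> real ^ 'p) \<Rightarrow> (nat \<Rightarrow> real) \<Rightarrow> real ^ 'p" where
  "tau \<kappa> M Xs A = (THE \<beta>. \<forall>\<beta>'. glm_obj \<kappa> M Xs A \<beta>' \<le> glm_obj \<kappa> M Xs A \<beta>)"

text \<open>Paper's R_{N,t}: the largest distance from a target to one of its t nearest
  neighbours among S_1..S_N (independent of tie-breaking). A training index n is among
  the t nearest neighbours of s (for some tie-breaking) iff fewer than t training points
  are strictly closer.\<close>
definition R_nn :: "(nat \<Rightarrow> 's::metric_space) \<Rightarrow> nat \<Rightarrow> (nat \<Rightarrow> 's) \<Rightarrow> nat \<Rightarrow> nat \<Rightarrow> real" where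
  "R_nn S M Sstar N t = Max (\<Union>m\<in>{..<M}.
      {dist (Sstar m) (S n) | n. n \<in> {1..N} \<and>
         card {j\<in>{1..N}. dist (Sstar m) (S j) < dist (Sstar m) (S n)} < t})"

text \<open>Adaptive number of neighbours: kseq ... N = k_N for N \<ge> 1 (k_1 = 1).\<close>
fun kseq :: "(nat \<Rightarrow> 's::metric_space) \<Rightarrow> nat \<Rightarrow> (nat \<Rightarrow> 's) \<Rightarrow> (nat \<Rightarrow> real) \<Rightarrow> nat \<Rightarrow> nat" where
  "kseq S M Sstar a 0 = 1"
| "kseq S M Sstar a (Suc N) =
     (if N = 0 then 1
      else if R_nn S M Sstar (Suc N) (kseq S M Sstar a N + 1) \<le> a (kseq S M Sstar a N)
           then kseq S M Sstar a N + 1 else kseq S M Sstar a N)"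

definition nn_before :: "(nat \<Rightarrow> 's::metric_space) \<Rightarrow> (nat \<Rightarrow> real) \<Rightarrow> 's \<Rightarrow> nat \<Rightarrow> nat \<Rightarrow> bool" where
  "nn_before S u s j n \<longleftrightarrow> dist s (S j) < dist s (S n) \<or>
     (dist s (S j) = dist s (S n) \<and> (u j < u n \<or> (u j = u n \<and> j < n)))"

definition nn_set :: "(nat \<Rightarrow> 's::metric_space) \<Rightarrow> (nat \<Rightarrow> real) \<Rightarrow> 's \<Rightarrow> nat \<Rightarrow> nat \<Rightarrow> nat set" where
  "nn_set S u s N k = {n\<in>{1..N}. card {j\<in>{1..N}. nn_before S u s j n} < k}"

definition nn_avg :: "(nat \<Rightarrow> 's::metric_space) \<Rightarrow> (nat \<Rightarrow> real) \<Rightarrow> (nat \<Rightarrow> 's) \<Rightarrow> nat \<Rightarrow> nat \<Rightarrow> (nat \<Rightarrow> real) \<Rightarrow> nat \<Rightarrow> real" where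
  "nn_avg S u Sstar N k y m = (\<Sum>n\<in>nn_set S u (Sstar m) N k. y n) / real k"

end

theory Submission
  imports Defs
begin


lemma glm_split:
  "glm_obj \<kappa> M Xs A \<beta> = glm_obj \<kappa> M Xs \<mu> \<beta> + (\<Sum>m<M. (Xs m \<bullet> \<beta>) * (A m - \<mu> m))"
  unfolding glm_obj_def by (simp add: sum.distrib[symmetric] sum_subtractf[symmetric] algebra_simps)

lemma lin_comb:
  fixes Xs :: "nat \<Rightarrow> real^'p"
  shows "(\<Sum>m<M. (Xs m \<bullet> ((1-t) *\<^sub>R x + t *\<^sub>R y)) * c m) =
     (1-t) * (\<Sum>m<M. (Xs m \<bullet> x) * c m) + t * (\<Sum>m<M. (Xs m \<bullet> y) * c m)"
  proof -
  have "(\<Sum>m<M. (Xs m \<bullet> ((1-t) *\<^sub>R x + t *\<^sub>R y)) * c m) = (\<Sum>m<M. (1-t) * ((Xs m \<bullet> x) * c m) + t * ((Xs m \<bullet> y) * c m))"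
    by (rule sum.cong) (auto simp: inner_add_right algebra_simps)
  then show ?thesis by (simp add: sum.distrib sum_distrib_left)
qed

lemma glm_concave:
  fixes Xs :: "nat \<Rightarrow> real^'p"
  assumes kc: "convex_on UNIV \<kappa>" and t: "0 \<le> t" "t \<le> 1"
  shows "(1-t) * glm_obj \<kappa> M Xs A x + t * glm_obj \<kappa> M Xs A y \<le> glm_obj \<kappa> M Xs A ((1-t) *\<^sub>R x + t *\<^sub>R y)"
proof -
  have "(1-t) * glm_obj \<kappa> M Xs A x + t * glm_obj \<kappa> M Xs A y =
    (\<Sum>m<M. ((1-t)*(Xs m \<bullet> x) + t*(Xs m \<bullet> y)) * A m - ((1-t) * \<kappa> (Xs m \<bullet> x) + t * \<kappa> (Xs m \<bullet> y)))"
    unfolding glm_obj_def by (simp add: sum_distrib_left sum.distrib[symmetric] sum_subtractf[symmetric] algebra_simps)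
  also have "\<dots> \<le> (\<Sum>m<M. ((1-t)*(Xs m \<bullet> x) + t*(Xs m \<bullet> y)) * A m - \<kappa> ((1-t)*(Xs m \<bullet> x) + t*(Xs m \<bullet> y)))"
  proof (rule sum_mono)
    fix m
    have "\<kappa> ((1 - t) *\<^sub>R (Xs m \<bullet> x) + t *\<^sub>R (Xs m \<bullet> y)) \<le> (1 - t) * \<kappa> (Xs m \<bullet> x) + t * \<kappa> (Xs m \<bullet> y)"
      by (rule convex_onD[OF kc]) (use t in auto)
    then show "((1-t)*(Xs m \<bullet> x) + t*(Xs m \<bullet> y)) * A m - ((1-t) * \<kappa> (Xs m \<bullet> x) + t * \<kappa> (Xs m \<bullet> y))
        \<le> ((1-t)*(Xs m \<bullet> x) + t*(Xs m \<bullet> y)) * A m - \<kappa> ((1-t)*(Xs m \<bullet> x) + t*(Xs m \<bullet> y))"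
      by simp
  qed
  also have "\<dots> = glm_obj \<kappa> M Xs A ((1-t) *\<^sub>R x + t *\<^sub>R y)"
    unfolding glm_obj_def by (simp add: inner_add_right)
  finally show ?thesis .
qed

lemma glm_cont:
  fixes Xs :: "nat \<Rightarrow> real^'p"
  assumes "continuous_on UNIV \<kappa>"
  shows "continuous_on S (glm_obj \<kappa> M Xs A)"
proof -
  have "continuous_on S (\<lambda>\<beta>. \<kappa> (Xs m \<bullet> \<beta>))" for m
    by (rule continuous_on_compose2[OF assms]) (auto intro!: continuous_intros)
  then show ?thesis unfolding glm_obj_def[abs_def]
    by (intro continuous_intros) auto
qed

lemma tau_local:
  fixes Xs :: "nat \<Rightarrow> real^'p" and \<mu> :: "nat \<Rightarrow> real"
  assumes kc: "convex_on UNIV \<kappa>" and kcont: "continuous_on UNIV \<kappa>"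
    and mx: "\<And>\<beta>. glm_obj \<kappa> M Xs \<mu> \<beta> \<le> glm_obj \<kappa> M Xs \<mu> \<beta>s"
    and sc: "\<exists>V. open V \<and> \<beta>s \<in> V \<and> strictly_concave_on V (glm_obj \<kappa> M Xs \<mu>)"
    and e: "\<epsilon> > 0"
  shows "\<exists>\<theta>>0. \<forall>A. (\<forall>m<M. \<bar>A m - \<mu> m\<bar> \<le> \<theta>) \<longrightarrow> dist (tau \<kappa> M Xs A) \<beta>s \<le> \<epsilon>"
proof -
  obtain V where V: "open V" "\<beta>s \<in> V" "strictly_concave_on V (glm_obj \<kappa> M Xs \<mu>)" using sc by blast
  obtain r0 where r0: "r0 > 0" "cball \<beta>s r0 \<subseteq> V" using V open_contains_cball by blast
  define r where "r = min \<epsilon> r0"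
  have r: "r > 0" "r \<le> \<epsilon>" "cball \<beta>s r \<subseteq> V" using r0 e by (auto simp: r_def)
  define g0 where "g0 = glm_obj \<kappa> M Xs \<mu>"
  have sc0: "(1-t)*g0 x + t*g0 y < g0 ((1-t) *\<^sub>R x + t *\<^sub>R y)"
    if "x \<in> cball \<beta>s r" "y \<in> cball \<beta>s r" "x \<noteq> y" "0<t" "t<1" for x y t
    using V(3) that r(3) unfolding strictly_concave_on_def g0_def by blast
  have cont0: "continuous_on S g0" for S unfolding g0_def by (rule glm_cont[OF kcont])
  have ne: "sphere \<beta>s r \<noteq> {}" using r by simp
  obtain \<beta>1 where b1: "\<beta>1 \<in> sphere \<beta>s r" "\<And>\<beta>. \<beta>\<in>sphere \<beta>s r \<Longrightarrow> g0 \<beta> \<le> g0 \<beta>1"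
    using continuous_attains_sup[OF compact_sphere ne cont0] by blast
  have "\<beta>1 \<noteq> \<beta>s" using b1(1) r by auto
  then have "(1-1/2)*g0 \<beta>1 + (1/2)*g0 \<beta>s < g0 ((1-1/2) *\<^sub>R \<beta>1 + (1/2) *\<^sub>R \<beta>s)"
    using b1(1) r by (intro sc0) auto
  moreover have "g0 ((1-1/2) *\<^sub>R \<beta>1 + (1/2) *\<^sub>R \<beta>s) \<le> g0 \<beta>s" using mx by (simp add: g0_def)
  ultimately have lt: "g0 \<beta>1 < g0 \<beta>s" by simp
  define \<eta> where "\<eta> = g0 \<beta>s - g0 \<beta>1"
  have eta: "\<eta> > 0" using lt by (simp add: \<eta>_def)
  define C where "C = (\<Sum>m<M. norm (Xs m)) * (norm \<beta>s + r) + 1"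
  have C: "C > 0" unfolding C_def using r by (intro add_nonneg_pos mult_nonneg_nonneg sum_nonneg) auto
  define \<theta> where "\<theta> = \<eta> / (4*C)"
  have th: "\<theta> > 0" using eta C by (simp add: \<theta>_def)
  have "\<forall>A. (\<forall>m<M. \<bar>A m - \<mu> m\<bar> \<le> \<theta>) \<longrightarrow> dist (tau \<kappa> M Xs A) \<beta>s \<le> \<epsilon>"
  proof (intro allI impI)
    fix A assume A: "\<forall>m<M. \<bar>A m - \<mu> m\<bar> \<le> \<theta>"
    define D where "D \<beta> = (\<Sum>m<M. (Xs m \<bullet> \<beta>) * (A m - \<mu> m))" for \<beta>
    define g where "g = glm_obj \<kappa> M Xs A"
    have gD: "g \<beta> = g0 \<beta> + D \<beta>" for \<beta> unfolding g_def g0_def D_def by (rule glm_split)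
    have Dlin: "D ((1-t) *\<^sub>R x + t *\<^sub>R y) = (1-t) * D x + t * D y" for t x y
      unfolding D_def by (rule lin_comb)
    have Dbd: "\<bar>D \<beta>\<bar> \<le> \<eta>/4" if "\<beta> \<in> cball \<beta>s r" for \<beta>
    proof -
      have nb: "norm \<beta> \<le> norm \<beta>s + r" using that norm_triangle_ineq2[of \<beta> \<beta>s]
        by (auto simp: dist_norm norm_minus_commute)
      have "\<bar>D \<beta>\<bar> \<le> (\<Sum>m<M. \<bar>(Xs m \<bullet> \<beta>) * (A m - \<mu> m)\<bar>)" unfolding D_def by (rule sum_abs)
      also have "\<dots> \<le> (\<Sum>m<M. (norm (Xs m) * (norm \<beta>s + r)) * \<theta>)"
      proof (rule sum_mono)
        fix m assume m: "m \<in> {..<M}"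
        have "\<bar>Xs m \<bullet> \<beta>\<bar> \<le> norm (Xs m) * norm \<beta>" by (rule Cauchy_Schwarz_ineq2)
        also have "\<dots> \<le> norm (Xs m) * (norm \<beta>s + r)" using nb by (intro mult_left_mono) auto
        finally have 1: "\<bar>Xs m \<bullet> \<beta>\<bar> \<le> norm (Xs m) * (norm \<beta>s + r)" .
        have 2: "\<bar>A m - \<mu> m\<bar> \<le> \<theta>" using A m by auto
        show "\<bar>(Xs m \<bullet> \<beta>) * (A m - \<mu> m)\<bar> \<le> (norm (Xs m) * (norm \<beta>s + r)) * \<theta>"
          unfolding abs_mult by (rule mult_mono[OF 1 2]) (use r in auto)
      qed
      also have "\<dots> = ((\<Sum>m<M. norm (Xs m)) * (norm \<beta>s + r)) * \<theta>"
        by (simp add: sum_distrib_right)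
      also have "\<dots> \<le> C * \<theta>" unfolding C_def using th by (intro mult_right_mono) auto
      also have "\<dots> = \<eta>/4" using C by (simp add: \<theta>_def)
      finally show ?thesis .
    qed
    have sphere_lt: "g \<beta> < g \<beta>s" if "\<beta> \<in> sphere \<beta>s r" for \<beta>
    proof -
      have "g \<beta> \<le> g0 \<beta>1 + \<eta>/4" using gD[of \<beta>] b1(2)[OF that] Dbd[of \<beta>] that by auto
      moreover have "g \<beta>s \<ge> g0 \<beta>s - \<eta>/4" using gD[of \<beta>s] Dbd[of \<beta>s] r by auto
      ultimately show ?thesis using eta \<eta>_def by argo
    qed
    have contg: "continuous_on S g" for S unfolding g_def by (rule glm_cont[OF kcont])
    obtain \<beta>2 where b2: "\<beta>2 \<in> cball \<beta>s r" "\<And>\<beta>. \<beta>\<in>cball \<beta>s r \<Longrightarrow> g \<beta> \<le> g \<beta>2"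
      proof -
      have "cball \<beta>s r \<noteq> {}" using r by simp
      from continuous_attains_sup[OF compact_cball this contg] show ?thesis using that by blast
    qed
    have "\<beta>2 \<notin> sphere \<beta>s r"
    proof
      assume "\<beta>2 \<in> sphere \<beta>s r"
      then have "g \<beta>2 < g \<beta>s" by (rule sphere_lt)
      moreover have "g \<beta>s \<le> g \<beta>2" using b2(2)[of \<beta>s] r by simp
      ultimately show False by simp
    qed
    then have db2: "dist \<beta>s \<beta>2 < r" using b2(1) by auto
    have scg: "(1-t)*g x + t*g y < g ((1-t) *\<^sub>R x + t *\<^sub>R y)"
      if "x \<in> cball \<beta>s r" "y \<in> cball \<beta>s r" "x \<noteq> y" "0<t" "t<1" for x y t
      using sc0[OF that] unfolding gD Dlin by (simp add: algebra_simps)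
    have strict: "g \<beta> < g \<beta>2" if "\<beta> \<noteq> \<beta>2" for \<beta>
    proof (rule ccontr)
      assume "\<not> g \<beta> < g \<beta>2"
      then have ge: "g \<beta>2 \<le> g \<beta>" by simp
      define \<rho> where "\<rho> = r - dist \<beta>s \<beta>2"
      have rho: "\<rho> > 0" using db2 by (simp add: \<rho>_def)
      have nz: "norm (\<beta> - \<beta>2) > 0" using that by simp
      define t where "t = min 1 (\<rho> / (2 * norm (\<beta> - \<beta>2)))"
      have t: "0 < t" "t \<le> 1" using rho nz by (auto simp: t_def)
      define z where "z = (1-t) *\<^sub>R \<beta>2 + t *\<^sub>R \<beta>"
      have zb: "z - \<beta>2 = t *\<^sub>R (\<beta> - \<beta>2)" by (simp add: z_def algebra_simps)
      have "norm (z - \<beta>2) = t * norm (\<beta> - \<beta>2)" using t by (simp add: zb)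
      also have "\<dots> \<le> (\<rho> / (2 * norm (\<beta> - \<beta>2))) * norm (\<beta> - \<beta>2)"
        using nz by (intro mult_right_mono) (auto simp: t_def)
      also have "\<dots> = \<rho>/2" using nz by simp
      finally have "norm (z - \<beta>2) \<le> \<rho>/2" .
      then have "dist \<beta>s z \<le> dist \<beta>s \<beta>2 + \<rho>/2"
        using dist_triangle[of \<beta>s z \<beta>2] norm_minus_commute[of \<beta>2 z] by (simp add: dist_norm)
      then have "dist \<beta>s z \<le> r" using db2 unfolding \<rho>_def by argo
      then have zin: "z \<in> cball \<beta>s r" by simp
      have zne: "z \<noteq> \<beta>2" using zb t that by auto
      have "(1-t) * g \<beta>2 + t * g \<beta> \<le> g z"
        unfolding z_def g_def using glm_concave[OF kc, of t] t by simp
      moreover have "(1-t) * g \<beta>2 + t * g \<beta>2 \<le> (1-t) * g \<beta>2 + t * g \<beta>" using ge t by simp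
      ultimately have gz: "g \<beta>2 \<le> g z" by (simp add: algebra_simps)
      have "(1-1/2)*g z + (1/2)*g \<beta>2 < g ((1-1/2) *\<^sub>R z + (1/2) *\<^sub>R \<beta>2)"
        using scg[OF zin b2(1) zne, of "1/2"] by simp
      moreover have "(1-1/2) *\<^sub>R z + (1/2) *\<^sub>R \<beta>2 \<in> cball \<beta>s r"
        using convex_cball[of \<beta>s r] zin b2(1) unfolding convex_def by auto
      moreover have "g ((1-1/2) *\<^sub>R z + (1/2) *\<^sub>R \<beta>2) \<le> g \<beta>2" by (rule b2(2)) fact
      ultimately show False using gz by simp
    qed
    have "tau \<kappa> M Xs A = \<beta>2"
      unfolding tau_def g_def[symmetric]
    proof (rule the_equality)
      show "\<forall>\<beta>'. g \<beta>' \<le> g \<beta>2" using strict by (metis order.order_iff_strict order.refl)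
      fix b assume "\<forall>\<beta>'. g \<beta>' \<le> g b"
      then show "b = \<beta>2" using strict[of b] by (meson not_le)
    qed
    then show "dist (tau \<kappa> M Xs A) \<beta>s \<le> \<epsilon>" using db2 r by (simp add: dist_commute)
  qed
  then show ?thesis using th by blast
qed


definition Qc :: "(nat \<Rightarrow> 's::metric_space) \<Rightarrow> nat \<Rightarrow> (nat \<Rightarrow> 's) \<Rightarrow> nat \<Rightarrow> nat \<Rightarrow> real \<Rightarrow> bool" where
  "Qc S M Sstar N t r \<longleftrightarrow> (\<forall>m<M. t \<le> card {j\<in>{1..N}. dist (Sstar m) (S j) \<le> r})"

lemma Qc_mono:
  assumes "Qc S M Sstar N t r" "N \<le> N'" "r \<le> r'" "t' \<le> t"
  shows "Qc S M Sstar N' t' r'"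
  unfolding Qc_def
proof (intro allI impI)
  fix m assume "m < M"
  then have "t \<le> card {j\<in>{1..N}. dist (Sstar m) (S j) \<le> r}" using assms(1) by (simp add: Qc_def)
  also have "\<dots> \<le> card {j\<in>{1..N'}. dist (Sstar m) (S j) \<le> r'}"
    by (rule card_mono) (use assms in auto)
  finally show "t' \<le> card {j\<in>{1..N'}. dist (Sstar m) (S j) \<le> r'}" using assms(4) by simp
qed

lemma Qc_cand:
  assumes Q: "Qc S M Sstar N t r" and m: "m < M" and n: "n \<in> {1..N}"
    and c: "card {j\<in>{1..N}. dist (Sstar m) (S j) < dist (Sstar m) (S n)} < t"
  shows "dist (Sstar m) (S n) \<le> r"
proof (rule ccontr)
  assume "\<not> ?thesis"
  then have "{j\<in>{1..N}. dist (Sstar m) (S j) \<le> r} \<subseteq> {j\<in>{1..N}. dist (Sstar m) (S j) < dist (Sstar m) (S n)}"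
    by auto
  then have "card {j\<in>{1..N}. dist (Sstar m) (S j) \<le> r} \<le> card {j\<in>{1..N}. dist (Sstar m) (S j) < dist (Sstar m) (S n)}"
    by (intro card_mono) auto
  moreover have "t \<le> card {j\<in>{1..N}. dist (Sstar m) (S j) \<le> r}" using Q m by (simp add: Qc_def)
  ultimately show False using c by simp
qed

lemma R_set_finite:
  fixes S :: "nat \<Rightarrow> 's::metric_space" and N M :: nat
  shows "finite (\<Union>m\<in>{..<M}. {dist (Sstar m) (S n) | n. n \<in> {1..N} \<and>
         card {j\<in>{1..N}. dist (Sstar m) (S j) < dist (Sstar m) (S n)} < t})"
proof -
  have "{dist (Sstar m) (S n) | n. n \<in> {1..N} \<and>
         card {j\<in>{1..N}. dist (Sstar m) (S j) < dist (Sstar m) (S n)} < t} \<subseteq> (\<lambda>n. dist (Sstar m) (S n)) ` {1..N}" for m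
    by auto
  note sub = this
  show ?thesis
  proof (rule finite_UN_I)
    fix m show "finite {dist (Sstar m) (S n) | n. n \<in> {1..N} \<and>
         card {j\<in>{1..N}. dist (Sstar m) (S j) < dist (Sstar m) (S n)} < t}"
      by (rule finite_subset[OF sub]) (intro finite_imageI finite_atLeastAtMost)
  qed simp
qed

lemma fin_argmin:
  fixes h :: "'a \<Rightarrow> real" assumes "finite A" "A \<noteq> {}" shows "\<exists>x\<in>A. \<forall>y\<in>A. h x \<le> h y"
proof -
  have "Min (h ` A) \<in> h ` A" using assms by (intro Min_in) auto
  then obtain x where "x \<in> A" "h x = Min (h ` A)" by auto
  then show ?thesis using assms by (metis Min_le finite_imageI imageI)
qed

lemma Qc_R:
  assumes Q: "Qc S M Sstar N t r" and M: "0 < M" and N: "1 \<le> N" and t: "1 \<le> t"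
  shows "R_nn S M Sstar N t \<le> r"
  unfolding R_nn_def
proof (subst Max_le_iff[OF R_set_finite])
  obtain n0 where n0: "n0 \<in> {1..N}" "\<And>j. j \<in> {1..N} \<Longrightarrow> dist (Sstar 0) (S n0) \<le> dist (Sstar 0) (S j)"
  proof -
    have "{1..N} \<noteq> {}" using N by simp
    from fin_argmin[OF finite_atLeastAtMost this, of "\<lambda>j. dist (Sstar 0) (S j)"] that show ?thesis by blast
  qed
  have e: "{j\<in>{1..N}. dist (Sstar 0) (S j) < dist (Sstar 0) (S n0)} = {}" using n0(2) by force
  then have "dist (Sstar 0) (S n0) \<in> (\<Union>m\<in>{..<M}. {dist (Sstar m) (S n) | n. n \<in> {1..N} \<and>
         card {j\<in>{1..N}. dist (Sstar m) (S j) < dist (Sstar m) (S n)} < t})"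
  proof -
    have c0: "card {j\<in>{1..N}. dist (Sstar 0) (S j) < dist (Sstar 0) (S n0)} < t"
      unfolding e using t by simp
    have "dist (Sstar 0) (S n0) \<in> {dist (Sstar 0) (S n) | n. n \<in> {1..N} \<and>
         card {j\<in>{1..N}. dist (Sstar 0) (S j) < dist (Sstar 0) (S n)} < t}"
      using n0(1) c0 by blast
    then show ?thesis using M by blast
  qed
  then show "(\<Union>m\<in>{..<M}. {dist (Sstar m) (S n) | n. n \<in> {1..N} \<and>
         card {j\<in>{1..N}. dist (Sstar m) (S j) < dist (Sstar m) (S n)} < t}) \<noteq> {}" by blast
  show "\<forall>a\<in>(\<Union>m\<in>{..<M}. {dist (Sstar m) (S n) | n. n \<in> {1..N} \<and>
         card {j\<in>{1..N}. dist (Sstar m) (S j) < dist (Sstar m) (S n)} < t}). a \<le> r"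
    using Qc_cand[OF Q] by blast
qed

lemma R_Qc:
  assumes R: "R_nn S M Sstar N t \<le> r" and tN: "t \<le> N"
  shows "Qc S M Sstar N t r"
  unfolding Qc_def
proof (intro allI impI)
  fix m assume m: "m < M"
  show "t \<le> card {j\<in>{1..N}. dist (Sstar m) (S j) \<le> r}"
  proof (rule ccontr)
    assume lt: "\<not> ?thesis"
    define G where "G = {j\<in>{1..N}. \<not> dist (Sstar m) (S j) \<le> r}"
    have "{1..N} = G \<union> {j\<in>{1..N}. dist (Sstar m) (S j) \<le> r}" by (auto simp: G_def)
    then have "card {1..N} \<le> card G + card {j\<in>{1..N}. dist (Sstar m) (S j) \<le> r}"
      using card_Un_le[of G "{j\<in>{1..N}. dist (Sstar m) (S j) \<le> r}"] by metis
    then have "N \<le> card G + card {j\<in>{1..N}. dist (Sstar m) (S j) \<le> r}" by simp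
    then have "G \<noteq> {}" using lt tN by auto
    moreover have "finite G" by (simp add: G_def)
    ultimately obtain n0 where n0: "n0 \<in> G" "\<And>j. j \<in> G \<Longrightarrow> dist (Sstar m) (S n0) \<le> dist (Sstar m) (S j)"
      using fin_argmin[of G "\<lambda>j. dist (Sstar m) (S j)"] by blast
    have "{j\<in>{1..N}. dist (Sstar m) (S j) < dist (Sstar m) (S n0)} \<subseteq> {j\<in>{1..N}. dist (Sstar m) (S j) \<le> r}"
    proof
      fix j assume j: "j \<in> {j\<in>{1..N}. dist (Sstar m) (S j) < dist (Sstar m) (S n0)}"
      show "j \<in> {j\<in>{1..N}. dist (Sstar m) (S j) \<le> r}"
      proof (rule ccontr)
        assume "j \<notin> {j\<in>{1..N}. dist (Sstar m) (S j) \<le> r}"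
        then have "j \<in> G" using j by (simp add: G_def)
        then show False using n0(2)[of j] j by simp
      qed
    qed
    then have "card {j\<in>{1..N}. dist (Sstar m) (S j) < dist (Sstar m) (S n0)} < t"
    proof -
      have "card {j\<in>{1..N}. dist (Sstar m) (S j) < dist (Sstar m) (S n0)} \<le> card {j\<in>{1..N}. dist (Sstar m) (S j) \<le> r}"
        using \<open>_ \<subseteq> _\<close> by (intro card_mono) auto
      then show ?thesis using lt by simp
    qed
    then have "dist (Sstar m) (S n0) \<in> (\<Union>m\<in>{..<M}. {dist (Sstar m) (S n) | n. n \<in> {1..N} \<and>
         card {j\<in>{1..N}. dist (Sstar m) (S j) < dist (Sstar m) (S n)} < t})"
      using m n0(1) unfolding G_def by (intro UN_I[of m]) auto
    then have "dist (Sstar m) (S n0) \<le> R_nn S M Sstar N t"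
      unfolding R_nn_def by (rule Max_ge[OF R_set_finite])
    with R n0(1) show False by (auto simp: G_def)
  qed
qed

lemma kseq_ge1: "1 \<le> kseq S M Sstar a N"
  by (induction N) auto

lemma kseq_le: "1 \<le> N \<Longrightarrow> kseq S M Sstar a N \<le> N"
  by (induction N) auto

lemma kseq_mono1: "kseq S M Sstar a N \<le> kseq S M Sstar a (Suc N)"
  by (cases N) auto

lemma kseq_mono: "N \<le> N' \<Longrightarrow> kseq S M Sstar a N \<le> kseq S M Sstar a N'"
  by (induction N' rule: dec_induct) (auto intro: order.trans[OF _ kseq_mono1])

lemma kseq_inv:
  "1 \<le> N \<Longrightarrow> 2 \<le> kseq S M Sstar a N \<Longrightarrow> Qc S M Sstar N (kseq S M Sstar a N) (a (kseq S M Sstar a N - 1))"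
proof (induction N)
  case 0 then show ?case by simp
next
  case (Suc N)
  show ?case
  proof (cases "N = 0")
    case True then show ?thesis using Suc by simp
  next
    case False
    show ?thesis
    proof (cases "R_nn S M Sstar (Suc N) (kseq S M Sstar a N + 1) \<le> a (kseq S M Sstar a N)")
      case True
      have "kseq S M Sstar a N + 1 \<le> Suc N" using kseq_le[of N] False by simp
      then have "Qc S M Sstar (Suc N) (kseq S M Sstar a N + 1) (a (kseq S M Sstar a N))"
        using R_Qc[OF True] by simp
      then show ?thesis using True False by simp
    next
      case c: False
      then have k: "kseq S M Sstar a (Suc N) = kseq S M Sstar a N" using False by simp
      then have "Qc S M Sstar N (kseq S M Sstar a N) (a (kseq S M Sstar a N - 1))"
        using Suc False by simp
      then show ?thesis unfolding k by (rule Qc_mono) auto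
    qed
  qed
qed

lemma infinite_count:
  assumes "infinite {n::nat. n \<ge> 1 \<and> P n}"
  shows "\<exists>N. K \<le> card {j\<in>{1..N}. P j}"
proof -
  obtain B where B: "B \<subseteq> {n. n \<ge> 1 \<and> P n}" "finite B" "card B = K"
    using infinite_arbitrarily_large[OF assms] by blast
  have "B \<subseteq> {j\<in>{1..Max (insert 0 B)}. P j}" using B by auto
  then have "card B \<le> card {j\<in>{1..Max (insert 0 B)}. P j}" by (intro card_mono) auto
  then show ?thesis using B by blast
qed

lemma kseq_unbounded:
  assumes M: "0 < M"
    and infill: "\<And>m V. m < M \<Longrightarrow> open V \<Longrightarrow> Sstar m \<in> V \<Longrightarrow> infinite {n. n \<ge> 1 \<and> S n \<in> V}"
    and a_pos: "\<And>t. t \<ge> 1 \<Longrightarrow> a t > 0"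
  shows "\<exists>N0. \<forall>N\<ge>N0. K \<le> kseq S M Sstar a N"
proof (induction K)
  case 0 then show ?case by simp
next
  case (Suc K)
  then obtain N0 where N0: "\<And>N. N \<ge> N0 \<Longrightarrow> K \<le> kseq S M Sstar a N" by blast
  show ?case
  proof (rule ccontr)
    assume "\<not> ?case"
    then have bad: "\<forall>N1. \<exists>N\<ge>N1. kseq S M Sstar a N \<le> K" by (meson not_less_eq_eq)
    have eqK: "kseq S M Sstar a N = K" if "N \<ge> N0" for N
    proof -
      obtain N' where "N' \<ge> N" "kseq S M Sstar a N' \<le> K" using bad by blast
      then have "kseq S M Sstar a N \<le> K" using order_trans[OF kseq_mono[of N N' S M Sstar a]] by blast
      then show ?thesis using N0[OF that] by simp
    qed
    have K1: "1 \<le> K" using eqK[of N0] kseq_ge1[of S M Sstar a N0] by simp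
    have "\<forall>m<M. \<exists>Nm. Suc K \<le> card {j\<in>{1..Nm}. dist (Sstar m) (S j) \<le> a K}"
    proof (intro allI impI)
      fix m assume m: "m < M"
      have "infinite {n. n \<ge> 1 \<and> S n \<in> ball (Sstar m) (a K)}"
        using infill[OF m, of "ball (Sstar m) (a K)"] a_pos[OF K1] by simp
      then have "infinite {n. n \<ge> 1 \<and> dist (Sstar m) (S n) < a K}" by simp
      then obtain Nm where "Suc K \<le> card {j\<in>{1..Nm}. dist (Sstar m) (S j) < a K}"
        using infinite_count[where P="\<lambda>n. dist (Sstar m) (S n) < a K" and K="Suc K"] by blast
      moreover have "card {j\<in>{1..Nm}. dist (Sstar m) (S j) < a K} \<le> card {j\<in>{1..Nm}. dist (Sstar m) (S j) \<le> a K}"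
        by (intro card_mono) auto
      ultimately have "Suc K \<le> card {j\<in>{1..Nm}. dist (Sstar m) (S j) \<le> a K}" by (rule order_trans)
      then show "\<exists>Nm. Suc K \<le> card {j\<in>{1..Nm}. dist (Sstar m) (S j) \<le> a K}" by blast
    qed
    then have "\<forall>m. \<exists>Nm. m < M \<longrightarrow> Suc K \<le> card {j\<in>{1..Nm}. dist (Sstar m) (S j) \<le> a K}" by blast
    from choice[OF this] obtain g where g0: "\<forall>m. m < M \<longrightarrow> Suc K \<le> card {j\<in>{1..g m}. dist (Sstar m) (S j) \<le> a K}"
      by blast
    have g: "Suc K \<le> card {j\<in>{1..g m}. dist (Sstar m) (S j) \<le> a K}" if "m < M" for m
      using g0 that by blast
    define N where "N = (\<Sum>m<M. g m) + N0 + 1"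
    have NN0: "N0 \<le> N" by (simp add: N_def)
    have N1: "N \<noteq> 0" by (simp add: N_def)
    have "Qc S M Sstar N (Suc K) (a K)"
      unfolding Qc_def
    proof (intro allI impI)
      fix m assume m: "m < M"
      have "g m \<le> (\<Sum>m<M. g m)" using m by (intro member_le_sum) auto
      then have "g m \<le> N" unfolding N_def by simp
      then have "card {j\<in>{1..g m}. dist (Sstar m) (S j) \<le> a K} \<le> card {j\<in>{1..N}. dist (Sstar m) (S j) \<le> a K}"
        by (intro card_mono) auto
      then show "Suc K \<le> card {j\<in>{1..N}. dist (Sstar m) (S j) \<le> a K}"
        using g[OF m] by simp
    qed
    then have "Qc S M Sstar (Suc N) (K + 1) (a K)" by (rule Qc_mono) auto
    then have "Qc S M Sstar (Suc N) (kseq S M Sstar a N + 1) (a (kseq S M Sstar a N))"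
      using eqK[OF NN0] by simp
    then have "R_nn S M Sstar (Suc N) (kseq S M Sstar a N + 1) \<le> a (kseq S M Sstar a N)"
      by (rule Qc_R) (use M in auto)
    then have "kseq S M Sstar a (Suc N) = kseq S M Sstar a N + 1" using N1 by (simp only: kseq.simps if_False if_True)
    then have "kseq S M Sstar a (Suc N) = K + 1" using eqK[OF NN0] by simp
    moreover have "kseq S M Sstar a (Suc N) = K" by (rule eqK) (use NN0 in simp)
    ultimately show False by simp
  qed
qed


lemma nn_before_irrefl: "\<not> nn_before S u s j j"
  by (auto simp: nn_before_def)

lemma nn_before_trans: "nn_before S u s i j \<Longrightarrow> nn_before S u s j n \<Longrightarrow> nn_before S u s i n"
  unfolding nn_before_def by (elim disjE conjE) auto

lemma nn_before_total: "j \<noteq> n \<Longrightarrow> nn_before S u s j n \<or> nn_before S u s n j"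
  unfolding nn_before_def by (smt (verit) linorder_neqE_nat)

lemma nn_set_sub: "nn_set S u s N k \<subseteq> {1..N}"
  by (auto simp: nn_set_def)

lemma nn_set_cand:
  assumes "n \<in> nn_set S u s N k"
  shows "card {j\<in>{1..N}. dist s (S j) < dist s (S n)} < k"
proof -
  have "card {j\<in>{1..N}. dist s (S j) < dist s (S n)} \<le> card {j\<in>{1..N}. nn_before S u s j n}"
    by (intro card_mono) (auto simp: nn_before_def)
  then show ?thesis using assms by (simp add: nn_set_def)
qed

lemma nn_set_card:
  fixes S :: "nat \<Rightarrow> 's::metric_space"
  assumes kN: "k \<le> N"
  shows "card (nn_set S u s N k) = k"
proof -
  define rk where "rk n = card {j\<in>{1..N}. nn_before S u s j n}" for n
  have lt: "rk n < rk n'" if "nn_before S u s n n'" "n \<in> {1..N}" for n n'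
  proof -
    have "{j\<in>{1..N}. nn_before S u s j n} \<subset> {j\<in>{1..N}. nn_before S u s j n'}"
    proof
      show "{j\<in>{1..N}. nn_before S u s j n} \<subseteq> {j\<in>{1..N}. nn_before S u s j n'}"
        using nn_before_trans[OF _ that(1)] by blast
      have "n \<in> {j\<in>{1..N}. nn_before S u s j n'}" using that by simp
      moreover have "n \<notin> {j\<in>{1..N}. nn_before S u s j n}" using nn_before_irrefl by blast
      ultimately show "{j\<in>{1..N}. nn_before S u s j n} \<noteq> {j\<in>{1..N}. nn_before S u s j n'}" by blast
    qed
    then show ?thesis unfolding rk_def by (intro psubset_card_mono) auto
  qed
  have inj: "inj_on rk {1..N}"
  proof (rule inj_onI)
    fix n n' assume nn: "n \<in> {1..N}" "n' \<in> {1..N}" "rk n = rk n'"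
    show "n = n'"
    proof (rule ccontr)
      assume "n \<noteq> n'"
      then have "nn_before S u s n n' \<or> nn_before S u s n' n" by (rule nn_before_total)
      then show False using lt nn by fastforce
    qed
  qed
  have rng: "rk ` {1..N} \<subseteq> {..<N}"
  proof
    fix x assume "x \<in> rk ` {1..N}"
    then obtain n where n: "n \<in> {1..N}" "x = rk n" by blast
    have "{j\<in>{1..N}. nn_before S u s j n} \<subseteq> {1..N} - {n}" using nn_before_irrefl by blast
    then have "rk n \<le> card ({1..N} - {n})" unfolding rk_def by (intro card_mono) auto
    also have "\<dots> = N - 1" using n by simp
    finally show "x \<in> {..<N}" using n by auto
  qed
  have img: "rk ` {1..N} = {..<N}"
    using card_image[OF inj] rng by (intro card_subset_eq) auto
  have ns: "nn_set S u s N k = {n\<in>{1..N}. rk n < k}" by (simp add: nn_set_def rk_def)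
  have "rk ` {n\<in>{1..N}. rk n < k} = {..<k}"
  proof -
    have "rk ` {n\<in>{1..N}. rk n < k} = {x\<in>rk ` {1..N}. x < k}" by auto
    also have "\<dots> = {..<k}" using img kN by auto
    finally show ?thesis .
  qed
  moreover have "inj_on rk {n\<in>{1..N}. rk n < k}" using inj by (rule inj_on_subset) auto
  ultimately have "card {n\<in>{1..N}. rk n < k} = k" by (metis card_image card_lessThan)
  then show ?thesis using ns by simp
qed


lemma (in prob_space) prob_indep_restrict:
  assumes ind: "indep_vars (\<lambda>_. borel) X I" and AB: "A \<inter> B = {}" "A \<subseteq> I" "B \<subseteq> I"
    and PA: "{x\<in>space (PiM A (\<lambda>_. borel)). P x} \<in> sets (PiM A (\<lambda>_. borel))"
    and QB: "{x\<in>space (PiM B (\<lambda>_. borel)). Q x} \<in> sets (PiM B (\<lambda>_. borel))"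
  shows "prob {\<omega>\<in>space M. P (restrict (\<lambda>i. X i \<omega>) A) \<and> Q (restrict (\<lambda>i. X i \<omega>) B)}
       = prob {\<omega>\<in>space M. P (restrict (\<lambda>i. X i \<omega>) A)} * prob {\<omega>\<in>space M. Q (restrict (\<lambda>i. X i \<omega>) B)}"
proof -
  have sp: "restrict (\<lambda>i. X i \<omega>) C \<in> space (PiM C (\<lambda>_. borel))" for \<omega> C
    by (simp add: space_PiM)
  have "prob ((\<lambda>\<omega>. (restrict (\<lambda>i. X i \<omega>) A, restrict (\<lambda>i. X i \<omega>) B)) -`
          ({x\<in>space (PiM A (\<lambda>_. borel)). P x} \<times> {x\<in>space (PiM B (\<lambda>_. borel)). Q x}) \<inter> space M) =
        prob ((\<lambda>\<omega>. restrict (\<lambda>i. X i \<omega>) A) -` {x\<in>space (PiM A (\<lambda>_. borel)). P x} \<inter> space M) *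
        prob ((\<lambda>\<omega>. restrict (\<lambda>i. X i \<omega>) B) -` {x\<in>space (PiM B (\<lambda>_. borel)). Q x} \<inter> space M)"
    by (rule indep_varD[OF indep_var_restrict[OF ind AB] PA QB])
  moreover have "(\<lambda>\<omega>. (restrict (\<lambda>i. X i \<omega>) A, restrict (\<lambda>i. X i \<omega>) B)) -`
          ({x\<in>space (PiM A (\<lambda>_. borel)). P x} \<times> {x\<in>space (PiM B (\<lambda>_. borel)). Q x}) \<inter> space M
       = {\<omega>\<in>space M. P (restrict (\<lambda>i. X i \<omega>) A) \<and> Q (restrict (\<lambda>i. X i \<omega>) B)}"
    using sp by auto
  moreover have "(\<lambda>\<omega>. restrict (\<lambda>i. X i \<omega>) A) -` {x\<in>space (PiM A (\<lambda>_. borel)). P x} \<inter> space M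
       = {\<omega>\<in>space M. P (restrict (\<lambda>i. X i \<omega>) A)}" using sp by auto
  moreover have "(\<lambda>\<omega>. restrict (\<lambda>i. X i \<omega>) B) -` {x\<in>space (PiM B (\<lambda>_. borel)). Q x} \<inter> space M
       = {\<omega>\<in>space M. Q (restrict (\<lambda>i. X i \<omega>) B)}" using sp by auto
  ultimately show ?thesis by simp
qed

definition nnpat :: "(nat \<Rightarrow> 's::metric_space) \<Rightarrow> 's \<Rightarrow> nat \<Rightarrow> nat \<Rightarrow> nat set \<Rightarrow> (nat \<Rightarrow> real) \<Rightarrow> bool" where
  "nnpat S s N k T u \<longleftrightarrow> (\<forall>n\<in>{1..N}. (n \<in> T \<longleftrightarrow>
      (\<Sum>j\<in>{1..N}. if dist s (S j) < dist s (S n) \<or> (dist s (S j) = dist s (S n) \<and> (u j < u n \<or> (u j = u n \<and> j < n))) then 1 else 0::real) < real k))"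

lemma nnpat_iff:
  assumes "T \<subseteq> {1..N}"
  shows "nnpat S s N k T u \<longleftrightarrow> nn_set S u s N k = T"
proof -
  have c: "real (card {j\<in>{1..N}. nn_before S u s j n}) =
    (\<Sum>j\<in>{1..N}. if dist s (S j) < dist s (S n) \<or> (dist s (S j) = dist s (S n) \<and> (u j < u n \<or> (u j = u n \<and> j < n))) then 1 else 0::real)" for n
    by (simp add: sum.If_cases nn_before_def Int_def)
  show ?thesis
    unfolding nnpat_def nn_set_def c[symmetric] using assms by auto
qed

lemma sets_iff_const:
  assumes "{x\<in>space M. P x} \<in> sets M" shows "{x\<in>space M. b = P x} \<in> sets M"
proof (cases b)
  case True then show ?thesis using assms by simp
next
  case False
  have "{x\<in>space M. b = P x} = space M - {x\<in>space M. P x}" using False by auto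
  then show ?thesis using assms by auto
qed

lemma nnpat_meas:
  fixes S :: "nat \<Rightarrow> 's::metric_space" and g :: "nat \<Rightarrow> 'i"
  assumes K: "\<And>n. n \<in> {1..N} \<Longrightarrow> g n \<in> K"
  shows "{x\<in>space (PiM K (\<lambda>_. borel)). nnpat S s N k T (\<lambda>n. x (g n))} \<in> sets (PiM K (\<lambda>_. borel))"
  unfolding nnpat_def
proof (rule sets.sets_Collect_finite_All)
  let ?P = "PiM K (\<lambda>_. borel) :: ('i \<Rightarrow> real) measure"
  show "finite {1..N}" by simp
  fix n assume n: "n \<in> {1..N}"
  have cn: "(\<lambda>x. x (g n)) \<in> borel_measurable ?P"
    using K[OF n] by (rule measurable_component_singleton)
  have sm: "(\<lambda>x. \<Sum>j\<in>{1..N}. if dist s (S j) < dist s (S n) \<or> (dist s (S j) = dist s (S n) \<and> (x (g j) < x (g n) \<or> (x (g j) = x (g n) \<and> j < n))) then 1 else 0::real)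
      \<in> borel_measurable ?P"
  proof (rule borel_measurable_sum)
    fix j assume j: "j \<in> {1..N}"
    have cj: "(\<lambda>x. x (g j)) \<in> borel_measurable ?P"
      using K[OF j] by (rule measurable_component_singleton)
    have L: "{x\<in>space ?P. x (g j) < x (g n)} \<in> sets ?P" by (rule borel_measurable_less[OF cj cn])
    have E: "{x\<in>space ?P. x (g j) = x (g n)} \<in> sets ?P" by (rule borel_measurable_eq[OF cj cn])
    have "{x\<in>space ?P. dist s (S j) < dist s (S n) \<or> (dist s (S j) = dist s (S n) \<and> (x (g j) < x (g n) \<or> (x (g j) = x (g n) \<and> j < n)))} \<in> sets ?P"
    proof (cases "dist s (S j) < dist s (S n)")
      case True then show ?thesis by simp
    next
      case c1: False
      show ?thesis
      proof (cases "dist s (S j) = dist s (S n)")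
        case False then show ?thesis using c1 by simp
      next
        case c2: True
        show ?thesis
        proof (cases "j < n")
          case True
          have "{x\<in>space ?P. dist s (S j) < dist s (S n) \<or> (dist s (S j) = dist s (S n) \<and> (x (g j) < x (g n) \<or> (x (g j) = x (g n) \<and> j < n)))}
             = {x\<in>space ?P. x (g j) < x (g n)} \<union> {x\<in>space ?P. x (g j) = x (g n)}" using c1 c2 True by blast
          then show ?thesis using L E by simp
        next
          case False
          have "{x\<in>space ?P. dist s (S j) < dist s (S n) \<or> (dist s (S j) = dist s (S n) \<and> (x (g j) < x (g n) \<or> (x (g j) = x (g n) \<and> j < n)))}
             = {x\<in>space ?P. x (g j) < x (g n)}" using c1 c2 False by blast
          then show ?thesis using L by simp
        qed
      qed
    qed
    note Pm = this
    have m1: "(\<lambda>x. 1::real) \<in> borel_measurable ?P" by simp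
    have m0: "(\<lambda>x. 0::real) \<in> borel_measurable ?P" by simp
    show "(\<lambda>x. if dist s (S j) < dist s (S n) \<or> (dist s (S j) = dist s (S n) \<and> (x (g j) < x (g n) \<or> (x (g j) = x (g n) \<and> j < n))) then 1 else 0::real)
      \<in> borel_measurable ?P" by (rule measurable_If[OF m1 m0 Pm])
  qed
  have Lk: "{x\<in>space ?P. (\<Sum>j\<in>{1..N}. if dist s (S j) < dist s (S n) \<or> (dist s (S j) = dist s (S n) \<and> (x (g j) < x (g n) \<or> (x (g j) = x (g n) \<and> j < n))) then 1 else 0::real) < real k} \<in> sets ?P"
    by (rule borel_measurable_less[OF sm measurable_const]) simp
  show "{x \<in> space ?P. (n \<in> T) = ((\<Sum>j\<in>{1..N}. if dist s (S j) < dist s (S n) \<or> (dist s (S j) = dist s (S n) \<and> (x (g j) < x (g n) \<or> (x (g j) = x (g n) \<and> j < n))) then 1 else 0::real) < real k)}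
     \<in> sets ?P"
    by (rule sets_iff_const[OF Lk])
qed


lemma (in prob_space) indep_pair_integral:
  fixes X :: "'i \<Rightarrow> 'a \<Rightarrow> real"
  assumes ind: "indep_vars (\<lambda>_. borel) X I" and ab: "a \<in> I" "b \<in> I" "a \<noteq> b"
    and int: "integrable M (X a)" "integrable M (X b)"
  shows "integrable M (\<lambda>\<omega>. (X a \<omega> - c) * (X b \<omega> - d))"
    "(\<integral>\<omega>. (X a \<omega> - c) * (X b \<omega> - d) \<partial>M) = (\<integral>\<omega>. X a \<omega> - c \<partial>M) * (\<integral>\<omega>. X b \<omega> - d \<partial>M)"
proof -
  have iv: "indep_var (PiM {a} (\<lambda>_. borel)) (\<lambda>\<omega>. restrict (\<lambda>i. X i \<omega>) {a}) (PiM {b} (\<lambda>_. borel)) (\<lambda>\<omega>. restrict (\<lambda>i. X i \<omega>) {b})"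
    by (rule indep_var_restrict[OF ind]) (use ab in auto)
  have ma: "(\<lambda>x. x a - c) \<in> borel_measurable (PiM {a} (\<lambda>_. borel))"
    by (intro borel_measurable_diff measurable_component_singleton) auto
  have mb: "(\<lambda>x. x b - d) \<in> borel_measurable (PiM {b} (\<lambda>_. borel))"
    by (intro borel_measurable_diff measurable_component_singleton) auto
  have iv2: "indep_var borel ((\<lambda>x. x a - c) \<circ> (\<lambda>\<omega>. restrict (\<lambda>i. X i \<omega>) {a})) borel ((\<lambda>x. x b - d) \<circ> (\<lambda>\<omega>. restrict (\<lambda>i. X i \<omega>) {b}))"
    by (rule indep_var_compose[OF iv ma mb])
  have e1: "((\<lambda>x. x a - c) \<circ> (\<lambda>\<omega>. restrict (\<lambda>i. X i \<omega>) {a})) = (\<lambda>\<omega>. X a \<omega> - c)" by (simp add: fun_eq_iff)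
  have e2: "((\<lambda>x. x b - d) \<circ> (\<lambda>\<omega>. restrict (\<lambda>i. X i \<omega>) {b})) = (\<lambda>\<omega>. X b \<omega> - d)" by (simp add: fun_eq_iff)
  have iv3: "indep_var borel (\<lambda>\<omega>. X a \<omega> - c) borel (\<lambda>\<omega>. X b \<omega> - d)" using iv2 unfolding e1 e2 .
  have i1: "integrable M (\<lambda>\<omega>. X a \<omega> - c)" using int(1) by simp
  have i2: "integrable M (\<lambda>\<omega>. X b \<omega> - d)" using int(2) by simp
  show "integrable M (\<lambda>\<omega>. (X a \<omega> - c) * (X b \<omega> - d))" by (rule indep_var_integrable[OF iv3 i1 i2])
  show "(\<integral>\<omega>. (X a \<omega> - c) * (X b \<omega> - d) \<partial>M) = (\<integral>\<omega>. X a \<omega> - c \<partial>M) * (\<integral>\<omega>. X b \<omega> - d \<partial>M)"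
    by (rule indep_var_lebesgue_integral[OF iv3 i1 i2])
qed

lemma (in prob_space) second_moment_sum:
  fixes e :: "nat \<Rightarrow> 'a \<Rightarrow> real" and B :: real
  assumes T: "finite T"
    and sq: "\<And>n. n \<in> T \<Longrightarrow> integrable M (\<lambda>\<omega>. e n \<omega> * e n \<omega>)"
    and sqb: "\<And>n. n \<in> T \<Longrightarrow> (\<integral>\<omega>. e n \<omega> * e n \<omega> \<partial>M) \<le> B"
    and cr: "\<And>i j. i \<in> T \<Longrightarrow> j \<in> T \<Longrightarrow> i \<noteq> j \<Longrightarrow> integrable M (\<lambda>\<omega>. e i \<omega> * e j \<omega>)"
    and crz: "\<And>i j. i \<in> T \<Longrightarrow> j \<in> T \<Longrightarrow> i \<noteq> j \<Longrightarrow> (\<integral>\<omega>. e i \<omega> * e j \<omega> \<partial>M) = 0"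
  shows "integrable M (\<lambda>\<omega>. (\<Sum>n\<in>T. e n \<omega>)\<^sup>2)" "(\<integral>\<omega>. (\<Sum>n\<in>T. e n \<omega>)\<^sup>2 \<partial>M) \<le> card T * B"
proof -
  have sqe: "(\<Sum>n\<in>T. e n \<omega>)\<^sup>2 = (\<Sum>i\<in>T. \<Sum>j\<in>T. e i \<omega> * e j \<omega>)" for \<omega>
    by (simp add: power2_eq_square sum_product)
  have ii: "integrable M (\<lambda>\<omega>. e i \<omega> * e j \<omega>)" if "i \<in> T" "j \<in> T" for i j
    using that sq cr by (cases "i = j") auto
  show "integrable M (\<lambda>\<omega>. (\<Sum>n\<in>T. e n \<omega>)\<^sup>2)"
    unfolding sqe using ii by (intro Bochner_Integration.integrable_sum) auto
  have "(\<integral>\<omega>. (\<Sum>n\<in>T. e n \<omega>)\<^sup>2 \<partial>M) = (\<Sum>i\<in>T. \<Sum>j\<in>T. (\<integral>\<omega>. e i \<omega> * e j \<omega> \<partial>M))"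
    unfolding sqe using ii by (simp add: Bochner_Integration.integral_sum Bochner_Integration.integrable_sum)
  also have "\<dots> = (\<Sum>i\<in>T. (\<integral>\<omega>. e i \<omega> * e i \<omega> \<partial>M))"
  proof (rule sum.cong[OF refl])
    fix i assume i: "i \<in> T"
    have "(\<Sum>j\<in>T. (\<integral>\<omega>. e i \<omega> * e j \<omega> \<partial>M)) = (\<Sum>j\<in>T. if j = i then (\<integral>\<omega>. e i \<omega> * e i \<omega> \<partial>M) else 0)"
      using crz i by (intro sum.cong) auto
    also have "\<dots> = (\<integral>\<omega>. e i \<omega> * e i \<omega> \<partial>M)" using i T by (simp add: sum.delta)
    finally show "(\<Sum>j\<in>T. (\<integral>\<omega>. e i \<omega> * e j \<omega> \<partial>M)) = (\<integral>\<omega>. e i \<omega> * e i \<omega> \<partial>M)" .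
  qed
  also have "\<dots> \<le> (\<Sum>i\<in>T. B)" using sqb by (intro sum_mono) auto
  also have "\<dots> = card T * B" by simp
  finally show "(\<integral>\<omega>. (\<Sum>n\<in>T. e n \<omega>)\<^sup>2 \<partial>M) \<le> card T * B" .
qed

lemma (in prob_space) cheb_sum:
  fixes e :: "nat \<Rightarrow> 'a \<Rightarrow> real" and V :: real
  assumes int: "integrable M (\<lambda>\<omega>. (\<Sum>n\<in>T. e n \<omega>)\<^sup>2)" and bd: "(\<integral>\<omega>. (\<Sum>n\<in>T. e n \<omega>)\<^sup>2 \<partial>M) \<le> V"
    and c: "c > 0"
  shows "prob {\<omega>\<in>space M. c \<le> \<bar>\<Sum>n\<in>T. e n \<omega>\<bar>} \<le> V / c\<^sup>2"
proof -
  have "{\<omega>\<in>space M. c \<le> \<bar>\<Sum>n\<in>T. e n \<omega>\<bar>} = {\<omega>\<in>space M. c\<^sup>2 \<le> (\<Sum>n\<in>T. e n \<omega>)\<^sup>2}"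
    using c by (auto simp: abs_le_square_iff[symmetric] intro: power2_le_imp_le)
  also have "prob \<dots> \<le> (\<integral>\<omega>. (\<Sum>n\<in>T. e n \<omega>)\<^sup>2 \<partial>M) / c\<^sup>2"
    by (rule integral_Markov_inequality_measure[OF int, of "space M"]) (use c in auto)
  also have "\<dots> \<le> V / c\<^sup>2" using bd c by (intro divide_right_mono) auto
  finally show ?thesis .
qed

lemma sum_abs_meas:
  fixes g :: "nat \<Rightarrow> 'i" and d :: "nat \<Rightarrow> real" and c :: real
  assumes K: "\<And>n. n \<in> T \<Longrightarrow> g n \<in> K"
  shows "{x\<in>space (PiM K (\<lambda>_. borel)). c \<le> \<bar>\<Sum>n\<in>T. x (g n) - d n\<bar>} \<in> sets (PiM K (\<lambda>_. borel))"
proof -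
  have "(\<lambda>x. \<Sum>n\<in>T. x (g n) - d n) \<in> borel_measurable (PiM K (\<lambda>_. borel))"
  proof (rule borel_measurable_sum)
    fix n assume "n \<in> T"
    then show "(\<lambda>x. x (g n) - d n) \<in> borel_measurable (PiM K (\<lambda>_. borel))"
      using K by (intro borel_measurable_diff measurable_component_singleton) auto
  qed
  then have "(\<lambda>x. \<bar>\<Sum>n\<in>T. x (g n) - d n\<bar>) \<in> borel_measurable (PiM K (\<lambda>_. borel))"
    by (rule borel_measurable_abs)
  moreover have "(\<lambda>x. c) \<in> borel_measurable (PiM K (\<lambda>_. borel))" by simp
  ultimately show ?thesis using borel_measurable_le by blast
qed




lemma nnpat_cong:
  assumes "\<And>n. n \<in> {1..N} \<Longrightarrow> u n = u' n"
  shows "nnpat S s N k T u = nnpat S s N k T u'"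
proof -
  have "(\<Sum>j\<in>{1..N}. if dist s (S j) < dist s (S n) \<or> (dist s (S j) = dist s (S n) \<and> (u j < u n \<or> (u j = u n \<and> j < n))) then 1 else 0::real)
      = (\<Sum>j\<in>{1..N}. if dist s (S j) < dist s (S n) \<or> (dist s (S j) = dist s (S n) \<and> (u' j < u' n \<or> (u' j = u' n \<and> j < n))) then 1 else 0::real)"
    if n: "n \<in> {1..N}" for n
  proof -
    have un: "u n = u' n" using assms n by blast
    show ?thesis by (rule sum.cong[OF refl]) (use assms un in auto)
  qed
  then show ?thesis unfolding nnpat_def by (intro ball_cong refl) auto
qed

lemma sets_restrict_pred:
  fixes X :: "'i \<Rightarrow> 'a \<Rightarrow> real"
  assumes X: "\<And>i. i \<in> Kset \<Longrightarrow> X i \<in> borel_measurable M"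
    and P: "{x\<in>space (PiM Kset (\<lambda>_. borel)). P x} \<in> sets (PiM Kset (\<lambda>_. borel))"
  shows "{\<omega>\<in>space M. P (restrict (\<lambda>i. X i \<omega>) Kset)} \<in> sets M"
proof -
  have m: "(\<lambda>\<omega>. restrict (\<lambda>i. X i \<omega>) Kset) \<in> measurable M (PiM Kset (\<lambda>_. borel))"
    by (rule measurable_restrict) (use X in auto)
  have "(\<lambda>\<omega>. restrict (\<lambda>i. X i \<omega>) Kset) -` {x\<in>space (PiM Kset (\<lambda>_. borel)). P x} \<inter> space M
      = {\<omega>\<in>space M. P (restrict (\<lambda>i. X i \<omega>) Kset)}" by (auto simp: space_PiM)
  with measurable_sets[OF m P] show ?thesis by simp
qed

theorem theorem1:
  fixes \<Omega> :: "'w measure"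
    and S :: "nat \<Rightarrow> 's::metric_space" and Sstar :: "nat \<Rightarrow> 's" and M :: nat
    and chi :: "'s \<Rightarrow> real ^ 'p"
    and Y :: "nat \<Rightarrow> 'w \<Rightarrow> real" and Ystar :: "nat \<Rightarrow> 'w \<Rightarrow> real"
    and U :: "nat \<Rightarrow> 'w \<Rightarrow> real"
    and f :: "'s \<Rightarrow> real" and L :: real and \<rho>2 :: "'s \<Rightarrow> real" and BY :: real
    and \<kappa> :: "real \<Rightarrow> real" and \<beta>star :: "real ^ 'p"
    and a :: "nat \<Rightarrow> real"
  assumes prob: "prob_space \<Omega>"
    and M_pos: "0 < M"
    (* measurability and finite second moments of the responses *)
    and Y_meas: "\<And>n. n \<ge> 1 \<Longrightarrow> Y n \<in> borel_measurable \<Omega>"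
    and Ystar_meas: "\<And>m. m < M \<Longrightarrow> Ystar m \<in> borel_measurable \<Omega>"
    and Y_int: "\<And>n. n \<ge> 1 \<Longrightarrow> integrable \<Omega> (Y n) \<and> integrable \<Omega> (\<lambda>\<omega>. (Y n \<omega>)\<^sup>2)"
    and Ystar_int: "\<And>m. m < M \<Longrightarrow> integrable \<Omega> (Ystar m) \<and> integrable \<Omega> (\<lambda>\<omega>. (Ystar m \<omega>)\<^sup>2)"
    (* (A2) means and mutual independence; the tie-breaking labels U_n are iid uniform
       on [0,1] and independent of the responses *)
    and A2_mean: "\<And>n. n \<ge> 1 \<Longrightarrow> prob_space.expectation \<Omega> (Y n) = f (S n)"
    and A2_mean_star: "\<And>m. m < M \<Longrightarrow> prob_space.expectation \<Omega> (Ystar m) = f (Sstar m)"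
    and A2_indep: "prob_space.indep_vars \<Omega> (\<lambda>_. borel)
        (\<lambda>i. case i of Inl n \<Rightarrow> Y n | Inr (Inl m) \<Rightarrow> Ystar m | Inr (Inr n) \<Rightarrow> U n)
        (Inl ` {1..} \<union> Inr ` Inl ` {..<M} \<union> Inr ` Inr ` {1..})"
    and U_unif: "\<And>n. n \<ge> 1 \<Longrightarrow> distr \<Omega> borel (U n) = uniform_measure lborel {0..1}"
    (* (A3) *)
    and A3: "\<And>s s'. \<bar>f s - f s'\<bar> \<le> L * dist s s'"
    (* (A4) *)
    and A4_range: "\<And>s. 0 \<le> \<rho>2 s \<and> \<rho>2 s \<le> BY"
    and A4_var: "\<And>n. n \<ge> 1 \<Longrightarrow> prob_space.variance \<Omega> (Y n) = \<rho>2 (S n)"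
    and A4_var_star: "\<And>m. m < M \<Longrightarrow> prob_space.variance \<Omega> (Ystar m) = \<rho>2 (Sstar m)"
    (* kappa: cumulant function of a natural exponential family, convex, C^\<infinity> *)
    and kappa_cumulant: "\<exists>\<nu>::real measure. sets \<nu> = sets borel \<and>
        (\<forall>\<theta>. (\<integral>\<^sup>+ y. ennreal (exp (\<theta> * y)) \<partial>\<nu>) = ennreal (exp (\<kappa> \<theta>)))"
    and kappa_convex: "convex_on UNIV \<kappa>"
    and kappa_smooth: "\<And>j x. ((deriv ^^ j) \<kappa>) differentiable (at x)"
    (* (A7) *)
    and A7_max: "\<And>\<beta>. glm_obj \<kappa> M (\<lambda>m. chi (Sstar m)) (\<lambda>m. f (Sstar m)) \<beta>
                   \<le> glm_obj \<kappa> M (\<lambda>m. chi (Sstar m)) (\<lambda>m. f (Sstar m)) \<beta>star"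
    and A7_strict: "\<exists>V. open V \<and> \<beta>star \<in> V \<and>
        strictly_concave_on V (glm_obj \<kappa> M (\<lambda>m. chi (Sstar m)) (\<lambda>m. f (Sstar m)))"
    (* infill asymptotics *)
    and infill: "\<And>m V. m < M \<Longrightarrow> open V \<Longrightarrow> Sstar m \<in> V \<Longrightarrow> infinite {n. n \<ge> 1 \<and> S n \<in> V}"
    (* the sequence (a_t) *)
    and a_pos: "\<And>t. t \<ge> 1 \<Longrightarrow> a t > 0"
    and a_lim: "a \<longlonglongrightarrow> 0"
  shows "\<forall>\<epsilon>>0. \<forall>\<delta>>0. \<exists>N0. \<forall>N\<ge>N0. \<exists>A\<in>sets \<Omega>.
           {\<omega>\<in>space \<Omega>. dist (tau \<kappa> M (\<lambda>m. chi (Sstar m))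
               (nn_avg S (\<lambda>n. U n \<omega>) Sstar N (kseq S M Sstar a N) (\<lambda>n. Y n \<omega>))) \<beta>star > \<epsilon>} \<subseteq> A
           \<and> measure \<Omega> A < \<delta>"
proof (intro allI impI)
  fix \<epsilon> \<delta> :: real assume e: "\<epsilon> > 0" and dl: "\<delta> > 0"
  interpret P: prob_space \<Omega> by (rule prob)
  define X where "X = (\<lambda>i. case i of Inl n \<Rightarrow> Y n | Inr (Inl m) \<Rightarrow> Ystar m | Inr (Inr n) \<Rightarrow> U n)"
  define I where "I = Inl ` {1::nat..} \<union> Inr ` Inl ` {..<M} \<union> Inr ` Inr ` {1::nat..}"
  have ind: "P.indep_vars (\<lambda>_. borel) X I" unfolding X_def I_def by (rule A2_indep)
  have Xmeas: "X i \<in> borel_measurable \<Omega>" if "i \<in> I" for i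
    using ind that unfolding P.indep_vars_def by auto
  have kcont: "continuous_on UNIV \<kappa>"
  proof -
    have "\<kappa> differentiable (at x)" for x using kappa_smooth[of 0 x] by simp
    then show ?thesis by (intro continuous_at_imp_continuous_on) (auto intro: differentiable_imp_continuous_within)
  qed
  obtain \<theta> where th: "\<theta> > 0"
    and thA: "\<And>A. (\<forall>m<M. \<bar>A m - f (Sstar m)\<bar> \<le> \<theta>) \<Longrightarrow> dist (tau \<kappa> M (\<lambda>m. chi (Sstar m)) A) \<beta>star \<le> \<epsilon>"
    using tau_local[OF kappa_convex kcont A7_max A7_strict e] by blast
  define \<eta> where "\<eta> = \<theta> / (2 * (\<bar>L\<bar> + 1))"
  have eta: "\<eta> > 0" using th by (simp add: \<eta>_def add_pos_nonneg)
  have Leta: "\<bar>L\<bar> * \<eta> \<le> \<theta> / 2"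
  proof -
    have "\<eta> * (\<bar>L\<bar> + 1) = \<theta> / 2" unfolding \<eta>_def by (simp add: field_simps add_pos_nonneg)
    moreover have "\<bar>L\<bar> * \<eta> \<le> \<eta> * (\<bar>L\<bar> + 1)" using eta by (simp add: algebra_simps)
    ultimately show ?thesis by simp
  qed
  define \<gamma> where "\<gamma> = \<theta> / 2"
  have ga: "\<gamma> > 0" using th by (simp add: \<gamma>_def)
  have BY: "0 \<le> BY" using A4_range[of "Sstar 0"] by simp
  obtain K0 where K0: "\<And>t. t \<ge> K0 \<Longrightarrow> \<bar>a t\<bar> < \<eta>"
    using LIMSEQ_D[OF a_lim eta] by auto
  define q where "q = 4 * real M * BY / (\<theta>\<^sup>2 * \<delta>)"
  define K2 where "K2 = nat \<lceil>q\<rceil> + 1"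
  have K2q: "q < real K2" unfolding K2_def using real_nat_ceiling_ge[of q] by simp
  obtain N0 where N0: "\<And>N. N \<ge> N0 \<Longrightarrow> K0 + 2 + K2 \<le> kseq S M Sstar a N"
  proof -
    have "\<exists>N0. \<forall>N\<ge>N0. K0 + 2 + K2 \<le> kseq S M Sstar a N"
      apply (rule kseq_unbounded[where M=M and Sstar=Sstar and S=S and a=a and K="K0+2+K2"])
        apply (rule M_pos)
       apply (rule infill; assumption)
      apply (rule a_pos; assumption)
      done
    then show ?thesis using that by blast
  qed
  show "\<exists>N0. \<forall>N\<ge>N0. \<exists>A\<in>sets \<Omega>.
           {\<omega>\<in>space \<Omega>. dist (tau \<kappa> M (\<lambda>m. chi (Sstar m))
               (nn_avg S (\<lambda>n. U n \<omega>) Sstar N (kseq S M Sstar a N) (\<lambda>n. Y n \<omega>))) \<beta>star > \<epsilon>} \<subseteq> A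
           \<and> measure \<Omega> A < \<delta>"
  proof (intro exI[of _ "max N0 1"] allI impI)
    fix N assume NN: "max N0 1 \<le> N"
    define k where "k = kseq S M Sstar a N"
    have kK: "K0 + 2 + K2 \<le> k" using N0 NN by (simp add: k_def)
    have N1: "1 \<le> N" using NN by simp
    have kN: "k \<le> N" using kseq_le[OF N1] by (simp add: k_def)
    have k2: "2 \<le> k" using kK by simp
    have kpos: "real k > 0" using k2 by simp
    have Qa: "Qc S M Sstar N k (a (k - 1))" using kseq_inv[OF N1] k2 by (simp add: k_def)
    have "K0 \<le> k - 1" using kK by simp
    then have "\<bar>a (k - 1)\<bar> < \<eta>" by (rule K0)
    then have ak: "a (k - 1) \<le> \<eta>" by simp
    have Q: "Qc S M Sstar N k \<eta>" using Qc_mono[OF Qa _ ak] by simp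
    define Bs where "Bs m T = {\<omega>\<in>space \<Omega>. nn_set S (\<lambda>n. U n \<omega>) (Sstar m) N k = T}" for m T
    define Cs where "Cs T = {\<omega>\<in>space \<Omega>. real k * \<gamma> \<le> \<bar>\<Sum>n\<in>T. Y n \<omega> - f (S n)\<bar>}" for T
    define A where "A = (\<Union>m\<in>{..<M}. \<Union>T\<in>Pow {1..N}. Bs m T \<inter> Cs T)"
    define KU where "KU = (Inr ` Inr ` {1..N} :: (nat + nat + nat) set)"
    have KU: "KU \<subseteq> I" by (auto simp: KU_def I_def)
    have restrU: "restrict (\<lambda>i. X i \<omega>) KU (Inr (Inr n)) = U n \<omega>" if "n \<in> {1..N}" for n \<omega>
      using that by (auto simp: KU_def X_def)
    have restrY: "restrict (\<lambda>i. X i \<omega>) (Inl ` T) (Inl n) = Y n \<omega>" if "n \<in> T" for n \<omega> T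
      using that by (auto simp: X_def)
    have BsR: "Bs m T = {\<omega>\<in>space \<Omega>. nnpat S (Sstar m) N k T (\<lambda>n. restrict (\<lambda>i. X i \<omega>) KU (Inr (Inr n)))}"
      if "T \<subseteq> {1..N}" for m T
    proof -
      have "nnpat S (Sstar m) N k T (\<lambda>n. restrict (\<lambda>i. X i \<omega>) KU (Inr (Inr n))) = nnpat S (Sstar m) N k T (\<lambda>n. U n \<omega>)" for \<omega>
        by (rule nnpat_cong) (erule restrU)
      then show ?thesis unfolding Bs_def by (simp only: nnpat_iff[OF that])
    qed
    have CsR: "Cs T = {\<omega>\<in>space \<Omega>. real k * \<gamma> \<le> \<bar>\<Sum>n\<in>T. restrict (\<lambda>i. X i \<omega>) (Inl ` T) (Inl n) - f (S n)\<bar>}" for T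
    proof -
      have "(\<Sum>n\<in>T. restrict (\<lambda>i. X i \<omega>) (Inl ` T) (Inl n) - f (S n)) = (\<Sum>n\<in>T. Y n \<omega> - f (S n))" for \<omega>
        by (rule sum.cong[OF refl]) (simp add: X_def)
      then show ?thesis unfolding Cs_def by simp
    qed
    have setsU: "{x\<in>space (PiM KU (\<lambda>_. borel)). nnpat S (Sstar m) N k T (\<lambda>n. x (Inr (Inr n)))} \<in> sets (PiM KU (\<lambda>_. borel))" for m T
      by (rule nnpat_meas) (auto simp: KU_def)
    have setsY: "{x\<in>space (PiM (Inl ` T) (\<lambda>_. borel)). real k * \<gamma> \<le> \<bar>\<Sum>n\<in>T. x (Inl n) - f (S n)\<bar>} \<in> sets (PiM (Inl ` T) (\<lambda>_. borel))" for T
      by (rule sum_abs_meas) auto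
    have TI: "Inl ` T \<subseteq> I" if "T \<subseteq> {1..N}" for T using that by (auto simp: I_def)
    have Bs_sets: "Bs m T \<in> sets \<Omega>" if "T \<subseteq> {1..N}" for m T
      unfolding BsR[OF that] by (rule sets_restrict_pred[OF _ setsU]) (use Xmeas KU in auto)
    have Cs_sets: "Cs T \<in> sets \<Omega>" if "T \<subseteq> {1..N}" for T
      unfolding CsR by (rule sets_restrict_pred[OF _ setsY]) (use Xmeas TI[OF that] in auto)
    have coll: "{x\<in>Z. PP x \<and> QQ x} = {x\<in>Z. PP x} \<inter> {x\<in>Z. QQ x}" for Z PP QQ by auto
    have indBC: "P.prob (Bs m T \<inter> Cs T) = P.prob (Bs m T) * P.prob (Cs T)" if "T \<subseteq> {1..N}" for m T
    proof -
      have disj: "KU \<inter> Inl ` T = {}" by (auto simp: KU_def)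
      from P.prob_indep_restrict[OF ind disj KU TI[OF that] setsU setsY]
      show ?thesis unfolding coll BsR[OF that] CsR .
    qed
    have Cs_bd: "P.prob (Cs T) \<le> real (card T) * BY / (real k * \<gamma>)\<^sup>2" if T: "T \<subseteq> {1..N}" for T
    proof -
      have finT: "finite T" using T finite_subset by blast
      have T1: "n \<ge> 1" if "n \<in> T" for n using T that by auto
      have XY: "X (Inl n) = Y n" for n by (simp add: X_def)
      have meanz: "P.expectation (\<lambda>\<omega>. Y n \<omega> - f (S n)) = 0" if "n \<ge> 1" for n
        using Y_int[OF that] A2_mean[OF that] by (simp add: Bochner_Integration.integral_diff P.prob_space)
      have sq: "integrable \<Omega> (\<lambda>\<omega>. (Y n \<omega> - f (S n)) * (Y n \<omega> - f (S n)))" if "n \<in> T" for n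
      proof -
        have "(\<lambda>\<omega>. (Y n \<omega> - f (S n)) * (Y n \<omega> - f (S n))) = (\<lambda>\<omega>. ((Y n \<omega>)\<^sup>2 - 2 * f (S n) * Y n \<omega>) + (f (S n))\<^sup>2)"
          by (simp add: fun_eq_iff power2_eq_square algebra_simps)
        moreover have "integrable \<Omega> (\<lambda>\<omega>. ((Y n \<omega>)\<^sup>2 - 2 * f (S n) * Y n \<omega>) + (f (S n))\<^sup>2)"
          using Y_int[OF T1[OF that]] by (intro Bochner_Integration.integrable_add Bochner_Integration.integrable_diff integrable_mult_right) auto
        ultimately show ?thesis by simp
      qed
      have sqb: "P.expectation (\<lambda>\<omega>. (Y n \<omega> - f (S n)) * (Y n \<omega> - f (S n))) \<le> BY" if "n \<in> T" for n
      proof -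
        have "P.expectation (\<lambda>\<omega>. (Y n \<omega> - f (S n)) * (Y n \<omega> - f (S n))) = P.variance (Y n)"
          using A2_mean[OF T1[OF that]] by (simp add: power2_eq_square)
        also have "\<dots> = \<rho>2 (S n)" using A4_var[OF T1[OF that]] .
        also have "\<dots> \<le> BY" using A4_range by simp
        finally show ?thesis .
      qed
      have cr: "integrable \<Omega> (\<lambda>\<omega>. (Y i \<omega> - f (S i)) * (Y j \<omega> - f (S j)))"
        and crz: "P.expectation (\<lambda>\<omega>. (Y i \<omega> - f (S i)) * (Y j \<omega> - f (S j))) = 0"
        if "i \<in> T" "j \<in> T" "i \<noteq> j" for i j
      proof -
        have ab: "Inl i \<in> I" "Inl j \<in> I" "Inl i \<noteq> (Inl j :: nat + nat + nat)"
          using that T1 by (auto simp: I_def)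
        have ii: "integrable \<Omega> (X (Inl i))" "integrable \<Omega> (X (Inl j))"
          using Y_int T1 that by (auto simp: XY)
        note r = P.indep_pair_integral[OF ind ab ii, of "f (S i)" "f (S j)"]
        show "integrable \<Omega> (\<lambda>\<omega>. (Y i \<omega> - f (S i)) * (Y j \<omega> - f (S j)))" using r(1) by (simp add: XY)
        show "P.expectation (\<lambda>\<omega>. (Y i \<omega> - f (S i)) * (Y j \<omega> - f (S j))) = 0"
          using r(2) meanz[OF T1[OF that(1)]] by (simp add: XY)
      qed
      note sm = P.second_moment_sum[of T "\<lambda>n \<omega>. Y n \<omega> - f (S n)" BY, OF finT sq sqb cr crz]
      have "P.prob {\<omega>\<in>space \<Omega>. real k * \<gamma> \<le> \<bar>\<Sum>n\<in>T. Y n \<omega> - f (S n)\<bar>} \<le> real (card T) * BY / (real k * \<gamma>)\<^sup>2"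
        by (rule P.cheb_sum[OF sm(1) sm(2) mult_pos_pos[OF kpos ga]])
      then show ?thesis unfolding Cs_def .
    qed
    define c0 where "c0 = BY / (real k * \<gamma>\<^sup>2)"
    have c0: "c0 \<ge> 0" using BY kpos by (simp add: c0_def)
    have BC_bd: "P.prob (Bs m T \<inter> Cs T) \<le> P.prob (Bs m T) * c0" if T: "T \<subseteq> {1..N}" for m T
    proof (cases "card T = k")
      case True
      have "P.prob (Cs T) \<le> real k * BY / (real k * \<gamma>)\<^sup>2" using Cs_bd[OF T] True by simp
      also have "\<dots> = c0" using kpos ga by (simp add: c0_def power2_eq_square field_simps)
      finally have "P.prob (Cs T) \<le> c0" .
      then show ?thesis unfolding indBC[OF T] by (intro mult_left_mono) auto
    next
      case False
      have "Bs m T = {}"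
      proof -
        have "nn_set S (\<lambda>n. U n \<omega>) (Sstar m) N k \<noteq> T" for \<omega>
          using nn_set_card[OF kN, of S "\<lambda>n. U n \<omega>" "Sstar m"] False by auto
        then show ?thesis unfolding Bs_def by auto
      qed
      then show ?thesis by simp
    qed
    have sumB: "(\<Sum>T\<in>Pow {1..N}. P.prob (Bs m T)) \<le> 1" for m
    proof -
      have "(\<Sum>T\<in>Pow {1..N}. P.prob (Bs m T)) = P.prob (\<Union>T\<in>Pow {1..N}. Bs m T)"
      proof (rule P.finite_measure_finite_Union[symmetric])
        show "Bs m ` Pow {1..N} \<subseteq> P.events" using Bs_sets by auto
        show "disjoint_family_on (Bs m) (Pow {1..N})" by (auto simp: disjoint_family_on_def Bs_def)
      qed simp
      also have "\<dots> \<le> 1" by simp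
      finally show ?thesis .
    qed
    have A_sets: "A \<in> sets \<Omega>"
      unfolding A_def using Bs_sets Cs_sets by (intro sets.finite_UN) auto
    have "measure \<Omega> A \<le> (\<Sum>m<M. measure \<Omega> (\<Union>T\<in>Pow {1..N}. Bs m T \<inter> Cs T))"
      unfolding A_def using Bs_sets Cs_sets by (intro measure_UNION_le sets.finite_UN) auto
    also have "\<dots> \<le> (\<Sum>m<M. \<Sum>T\<in>Pow {1..N}. measure \<Omega> (Bs m T \<inter> Cs T))"
      using Bs_sets Cs_sets by (intro sum_mono measure_UNION_le) auto
    also have "\<dots> \<le> (\<Sum>m<M. \<Sum>T\<in>Pow {1..N}. P.prob (Bs m T) * c0)"
      using BC_bd by (intro sum_mono) auto
    also have "\<dots> = (\<Sum>m<M. (\<Sum>T\<in>Pow {1..N}. P.prob (Bs m T)) * c0)"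
      by (simp add: sum_distrib_right)
    also have "\<dots> \<le> (\<Sum>m<M. c0)"
    proof (rule sum_mono)
      fix m
      have "(\<Sum>T\<in>Pow {1..N}. P.prob (Bs m T)) * c0 \<le> 1 * c0" by (rule mult_right_mono[OF sumB c0])
      then show "(\<Sum>T\<in>Pow {1..N}. P.prob (Bs m T)) * c0 \<le> c0" by simp
    qed
    also have "\<dots> = real M * c0" by simp
    also have "\<dots> < \<delta>"
    proof -
      have q0: "0 \<le> q" using BY th dl by (simp add: q_def)
      have "q < real k" using K2q kK by simp
      then have "4 * real M * BY < real k * (\<theta>\<^sup>2 * \<delta>)"
        using th dl unfolding q_def by (simp add: field_simps)
      then show ?thesis using kpos th unfolding c0_def \<gamma>_def by (simp add: field_simps power2_eq_square)
    qed
    finally have measA: "measure \<Omega> A < \<delta>" .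
    have sub: "{\<omega>\<in>space \<Omega>. dist (tau \<kappa> M (\<lambda>m. chi (Sstar m))
               (nn_avg S (\<lambda>n. U n \<omega>) Sstar N (kseq S M Sstar a N) (\<lambda>n. Y n \<omega>))) \<beta>star > \<epsilon>} \<subseteq> A"
    proof
      fix \<omega> assume "\<omega> \<in> {\<omega>\<in>space \<Omega>. dist (tau \<kappa> M (\<lambda>m. chi (Sstar m))
               (nn_avg S (\<lambda>n. U n \<omega>) Sstar N (kseq S M Sstar a N) (\<lambda>n. Y n \<omega>))) \<beta>star > \<epsilon>}"
      then have w: "\<omega> \<in> space \<Omega>" and big: "dist (tau \<kappa> M (\<lambda>m. chi (Sstar m))
               (nn_avg S (\<lambda>n. U n \<omega>) Sstar N k (\<lambda>n. Y n \<omega>))) \<beta>star > \<epsilon>" by (auto simp: k_def)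
      obtain m where m: "m < M" and mbig: "\<bar>nn_avg S (\<lambda>n. U n \<omega>) Sstar N k (\<lambda>n. Y n \<omega>) m - f (Sstar m)\<bar> > \<theta>"
        using thA[of "nn_avg S (\<lambda>n. U n \<omega>) Sstar N k (\<lambda>n. Y n \<omega>)"] big by force
      define T where "T = nn_set S (\<lambda>n. U n \<omega>) (Sstar m) N k"
      have T: "T \<subseteq> {1..N}" unfolding T_def by (rule nn_set_sub)
      have cT: "card T = k" unfolding T_def by (rule nn_set_card[OF kN])
      have dT: "dist (Sstar m) (S n) \<le> \<eta>" if "n \<in> T" for n
        using Qc_cand[OF Q m _ nn_set_cand] that T unfolding T_def by blast
      define E where "E = (\<Sum>n\<in>T. Y n \<omega> - f (S n))"
      define F where "F = (\<Sum>n\<in>T. f (S n) - f (Sstar m))"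
      have avg: "nn_avg S (\<lambda>n. U n \<omega>) Sstar N k (\<lambda>n. Y n \<omega>) m = (\<Sum>n\<in>T. Y n \<omega>) / real k"
        by (simp add: nn_avg_def T_def)
      have sumY: "(\<Sum>n\<in>T. Y n \<omega>) - real k * f (Sstar m) = E + F"
        unfolding E_def F_def using cT by (simp add: sum.distrib[symmetric] sum_subtractf algebra_simps)
      have Fb: "\<bar>F\<bar> \<le> real k * (\<theta> / 2)"
      proof -
        have "\<bar>F\<bar> \<le> (\<Sum>n\<in>T. \<bar>f (S n) - f (Sstar m)\<bar>)" unfolding F_def by (rule sum_abs)
        also have "\<dots> \<le> (\<Sum>n\<in>T. \<theta> / 2)"
        proof (rule sum_mono)
          fix n assume n: "n \<in> T"
          have "\<bar>f (S n) - f (Sstar m)\<bar> \<le> L * dist (S n) (Sstar m)" by (rule A3)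
          also have "\<dots> \<le> \<bar>L\<bar> * dist (S n) (Sstar m)" by (simp add: mult_right_mono)
          also have "\<dots> \<le> \<bar>L\<bar> * \<eta>" using dT[OF n] by (simp add: dist_commute mult_left_mono)
          also have "\<dots> \<le> \<theta> / 2" by (rule Leta)
          finally show "\<bar>f (S n) - f (Sstar m)\<bar> \<le> \<theta> / 2" .
        qed
        also have "\<dots> = real k * (\<theta> / 2)" using cT by simp
        finally show ?thesis .
      qed
      have "\<theta> < \<bar>(\<Sum>n\<in>T. Y n \<omega>) / real k - f (Sstar m)\<bar>" using mbig avg by simp
      also have "\<dots> = \<bar>(\<Sum>n\<in>T. Y n \<omega>) - real k * f (Sstar m)\<bar> / real k"
        using kpos by (simp add: field_simps)
      finally have "real k * \<theta> < \<bar>E + F\<bar>" using kpos sumY by (simp add: field_simps)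
      then have "real k * \<gamma> \<le> \<bar>E\<bar>" using Fb unfolding \<gamma>_def by argo
      then have "\<omega> \<in> Cs T" unfolding Cs_def E_def using w by simp
      moreover have "\<omega> \<in> Bs m T" unfolding Bs_def T_def using w by simp
      ultimately show "\<omega> \<in> A" unfolding A_def using m T by blast
    qed
    show "\<exists>A\<in>sets \<Omega>.
           {\<omega>\<in>space \<Omega>. dist (tau \<kappa> M (\<lambda>m. chi (Sstar m))
               (nn_avg S (\<lambda>n. U n \<omega>) Sstar N (kseq S M Sstar a N) (\<lambda>n. Y n \<omega>))) \<beta>star > \<epsilon>} \<subseteq> A
           \<and> measure \<Omega> A < \<delta>" using A_sets sub measA by blast
  qed
qed

end
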